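(* Fix $\alpha_0>d/2$. Then for any $s\ge\alpha_0$ and $X,Y\in\mathcal M^s$, $$\|XY\|_s\le K_0\|X\|_{\alpha_0}\|Y\|_s+K_1\|X\|_s\|Y\|_{\alpha_0},$$ where $$K_0=\sqrt{20\sum_{\mathbf k\in\mathbb Z^d}\langle\mathbf k\rangle^{-2\alpha_0}},\qquad K_1=K_1(s)=(1-10^{-\frac{1}{2s}})^{-s}\sqrt{2\sum_{\mathbf k\in\mathbb Z^d}\langle\mathbf k\rangle^{-2\alpha_0}}.$$
   Context: Let $d\ge1$; $|\mathbf k|=\max_v|k_v|$, $\langle\mathbf k\rangle=\max\{1,|\mathbf k|\}$. $(\mathfrak B,\|\cdot\|_{\mathfrak B})$ is a Banach algebra of complex sequences indexed by $\mathbb Z^d$, with pointwise operations, containing the constant sequence $1$ with norm $1$, and translation invariant ($\|\sigma_{\mathbf j}a\|_{\mathfrak B}=\|a\|_{\mathfrak B}$ where $(\sigma_{\mathbf j}a)_{\mathbf i}=a_{\mathbf i-\mathbf j}$). $\mathcal M$ is the set of matrices $A=(a_{\mathbf i,\mathbf j})_{\mathbf i,\mathbf j\in\mathbb Z^d}$ whose $\mathbf k$-diagonals $A_{\mathbf k}=(a_{\mathbf i,\mathbf i-\mathbf k})_{\mathbf i}$ belong to $\mathfrak B$; $\|A\|_s^2=\sum_{\mathbf k}\|A_{\mathbf k}\|_{\mathfrak B}^2\langle\mathbf k\rangle^{2s}$ and $\mathcal M^s=\{A\in\mathcal M:\|A\|_s<\infty\}$. $XY$ is the matrix product $(XY)_{\mathbf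 i,\mathbf j}=\sum_{\mathbf m}X_{\mathbf i,\mathbf m}Y_{\mathbf m,\mathbf j}$. *)

theory Defs
  imports "HOL-Analysis.Analysis"
begin

text \<open>Indices in Z^d are functions 'd \<Rightarrow> int with 'd a finite (nonempty) type, d = CARD('d).
 Sequences are functions (('d \<Rightarrow> int) \<Rightarrow> complex).\<close>

type_synonym 'd seq = "('d \<Rightarrow> int) \<Rightarrow> complex"
type_synonym 'd mat = "('d \<Rightarrow> int) \<Rightarrow> ('d \<Rightarrow> int) \<Rightarrow> complex"

definition supnorm_idx :: "('d::finite \<Rightarrow> int) \<Rightarrow> int" where
  "supnorm_idx k = Max (range (\<lambda>v. \<bar>k v\<bar>))"

definition jbr :: "('d::finite \<Rightarrow> int) \<Rightarrow> real" where
  "jbr k = real_of_int (max 1 (supnorm_idx k))"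

definition shift :: "('d \<Rightarrow> int) \<Rightarrow> 'd seq \<Rightarrow> 'd seq" where
  "shift j a = (\<lambda>i. a (\<lambda>v. i v - j v))"

definition seq_banach_algebra :: "'d seq set \<Rightarrow> ('d seq \<Rightarrow> real) \<Rightarrow> bool" where
  "seq_banach_algebra B N \<longleftrightarrow>
     (\<lambda>_. 0) \<in> B \<and>
     (\<forall>a\<in>B. \<forall>b\<in>B. (\<lambda>i. a i + b i) \<in> B) \<and>
     (\<forall>a\<in>B. \<forall>c. (\<lambda>i. c * a i) \<in> B) \<and>
     (\<forall>a\<in>B. \<forall>b\<in>B. (\<lambda>i. a i * b i) \<in> B) \<and>
     (\<forall>a\<in>B. N a \<ge> 0) \<and>
     (\<forall>a\<in>B. N a = 0 \<longleftrightarrow> a = (\<lambda>_. 0)) \<and>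
     (\<forall>a\<in>B. \<forall>b\<in>B. N (\<lambda>i. a i + b i) \<le> N a + N b) \<and>
     (\<forall>a\<in>B. \<forall>c. N (\<lambda>i. c * a i) = cmod c * N a) \<and>
     (\<forall>a\<in>B. \<forall>b\<in>B. N (\<lambda>i. a i * b i) \<le> N a * N b) \<and>
     (\<forall>f. (\<forall>n. f n \<in> B) \<and>
          (\<forall>e>0. \<exists>M. \<forall>m\<ge>M. \<forall>n\<ge>M. N (\<lambda>i. f m i - f n i) < e)
          \<longrightarrow> (\<exists>a\<in>B. (\<lambda>n. N (\<lambda>i. f n i - a i)) \<longlonglongrightarrow> 0)) \<and>
     (\<lambda>_. 1) \<in> B \<and> N (\<lambda>_. 1) = 1 \<and>
     (\<forall>a\<in>B. \<forall>j. shift j a \<in> B \<and> N (shift j a) = N a)"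

definition diag :: "'d mat \<Rightarrow> ('d \<Rightarrow> int) \<Rightarrow> 'd seq" where
  "diag A k = (\<lambda>i. A i (\<lambda>v. i v - k v))"

definition in_M :: "'d seq set \<Rightarrow> 'd mat \<Rightarrow> bool" where
  "in_M B A \<longleftrightarrow> (\<forall>k. diag A k \<in> B)"

definition msnorm :: "('d::finite seq \<Rightarrow> real) \<Rightarrow> real \<Rightarrow> 'd mat \<Rightarrow> real" where
  "msnorm N s A = sqrt (\<Sum>\<^sub>\<infinity>k. (N (diag A k))\<^sup>2 * jbr k powr (2 * s))"

definition in_Ms :: "'d::finite seq set \<Rightarrow> ('d seq \<Rightarrow> real) \<Rightarrow> real \<Rightarrow> 'd mat \<Rightarrow> bool" where
  "in_Ms B N s A \<longleftrightarrow> in_M B A \<and> (\<lambda>k. (N (diag A k))\<^sup>2 * jbr k powr (2 * s)) summable_on UNIV"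

definition mprod :: "'d mat \<Rightarrow> 'd mat \<Rightarrow> 'd mat" where
  "mprod X Y = (\<lambda>i j. \<Sum>\<^sub>\<infinity>m. X i m * Y m j)"

end

theory Submission
  imports Defs
begin



locale sba =
  fixes B :: "('d::finite) seq set" and N :: "'d seq \<Rightarrow> real"
  assumes ba: "seq_banach_algebra B N"
begin

lemma zero_B: "(\<lambda>_. 0) \<in> B" using ba unfolding seq_banach_algebra_def by blast
lemma add_B: "a \<in> B \<Longrightarrow> b \<in> B \<Longrightarrow> (\<lambda>i. a i + b i) \<in> B" using ba unfolding seq_banach_algebra_def by blast
lemma smult_B: "a \<in> B \<Longrightarrow> (\<lambda>i. c * a i) \<in> B" using ba unfolding seq_banach_algebra_def by blast
lemma mult_B: "a \<in> B \<Longrightarrow> b \<in> B \<Longrightarrow> (\<lambda>i. a i * b i) \<in> B" using ba unfolding seq_banach_algebra_def by blast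
lemma N_nonneg: "a \<in> B \<Longrightarrow> N a \<ge> 0" using ba unfolding seq_banach_algebra_def by blast
lemma N_zero_iff: "a \<in> B \<Longrightarrow> N a = 0 \<longleftrightarrow> a = (\<lambda>_. 0)" using ba unfolding seq_banach_algebra_def by blast
lemma N_add: "a \<in> B \<Longrightarrow> b \<in> B \<Longrightarrow> N (\<lambda>i. a i + b i) \<le> N a + N b" using ba unfolding seq_banach_algebra_def by blast
lemma N_smult: "a \<in> B \<Longrightarrow> N (\<lambda>i. c * a i) = cmod c * N a" using ba unfolding seq_banach_algebra_def by blast
lemma N_mult: "a \<in> B \<Longrightarrow> b \<in> B \<Longrightarrow> N (\<lambda>i. a i * b i) \<le> N a * N b" using ba unfolding seq_banach_algebra_def by blast
lemma complete: "(\<forall>n. f n \<in> B) \<Longrightarrow> (\<forall>e>0. \<exists>M. \<forall>m\<ge>M. \<forall>n\<ge>M. N (\<lambda>i. f m i - f n i) < e)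
          \<Longrightarrow> (\<exists>a\<in>B. (\<lambda>n. N (\<lambda>i. f n i - a i)) \<longlonglongrightarrow> 0)" using ba unfolding seq_banach_algebra_def by blast
lemma one_B: "(\<lambda>_. 1) \<in> B" using ba unfolding seq_banach_algebra_def by blast
lemma N_one: "N (\<lambda>_. 1) = 1" using ba unfolding seq_banach_algebra_def by blast
lemma shift_B: "a \<in> B \<Longrightarrow> shift j a \<in> B" using ba unfolding seq_banach_algebra_def by blast
lemma N_shift: "a \<in> B \<Longrightarrow> N (shift j a) = N a" using ba unfolding seq_banach_algebra_def by blast

lemma N_zero: "N (\<lambda>_. 0) = 0" using N_zero_iff zero_B by blast

lemma neg_eq: "(\<lambda>i. - (a::'d seq) i) = (\<lambda>i. (-1) * a i)" by simp
lemma sub_eq: "(\<lambda>i. (a::'d seq) i - (b::'d seq) i) = (\<lambda>i. a i + (\<lambda>i. (-1) * b i) i)" by simp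

lemma neg_B: "a \<in> B \<Longrightarrow> (\<lambda>i. - a i) \<in> B" by (subst neg_eq) (rule smult_B)
lemma N_neg: "a \<in> B \<Longrightarrow> N (\<lambda>i. - a i) = N a" using N_smult[of a "-1"] by simp
lemma sub_B: "a \<in> B \<Longrightarrow> b \<in> B \<Longrightarrow> (\<lambda>i. a i - b i) \<in> B"
  by (subst sub_eq) (intro add_B smult_B)
lemma N_sub: "a \<in> B \<Longrightarrow> b \<in> B \<Longrightarrow> N (\<lambda>i. a i - b i) \<le> N a + N b"
proof -
  assume a: "a \<in> B" "b \<in> B"
  have "(\<lambda>i. a i - b i) = (\<lambda>i. a i + (\<lambda>i. - b i) i)" by simp
  then show ?thesis using N_add[OF a(1) neg_B[OF a(2)]] N_neg[OF a(2)] by simp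
qed
lemma N_sub_comm: "a \<in> B \<Longrightarrow> b \<in> B \<Longrightarrow> N (\<lambda>i. a i - b i) = N (\<lambda>i. b i - a i)"
proof -
  assume a: "a \<in> B" "b \<in> B"
  have "(\<lambda>i. a i - b i) = (\<lambda>i. - (\<lambda>i. b i - a i) i)" by simp
  then show ?thesis using N_neg[OF sub_B[OF a(2,1)]] by simp
qed

lemma sum_B:
  assumes "finite F" "\<And>l. l \<in> F \<Longrightarrow> f l \<in> B"
  shows "(\<lambda>i. \<Sum>l\<in>F. f l i) \<in> B \<and> N (\<lambda>i. \<Sum>l\<in>F. f l i) \<le> (\<Sum>l\<in>F. N (f l))"
  using assms
proof (induction F rule: finite_induct)
  case empty
  then show ?case using zero_B N_zero by simp
next
  case (insert x F)
  then have h: "(\<lambda>i. \<Sum>l\<in>F. f l i) \<in> B" "N (\<lambda>i. \<Sum>l\<in>F. f l i) \<le> (\<Sum>l\<in>F. N (f l))" "f x \<in> B" by auto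
  have e: "(\<lambda>i. \<Sum>l\<in>insert x F. f l i) = (\<lambda>i. f x i + (\<lambda>i. \<Sum>l\<in>F. f l i) i)"
    using insert by simp
  have "(\<Sum>l\<in>insert x F. N (f l)) = N (f x) + (\<Sum>l\<in>F. N (f l))"
    using insert(1,2) by (rule sum.insert)
  then show ?case unfolding e using add_B[OF h(3,1)] N_add[OF h(3,1)] h(2) by linarith
qed

lemma pow_B:
  assumes "b \<in> B" shows "(\<lambda>i. b i ^ n) \<in> B \<and> N (\<lambda>i. b i ^ n) \<le> N b ^ n"
proof (induction n)
  case 0
  then show ?case using one_B N_one by simp
next
  case (Suc n)
  have e: "(\<lambda>i. b i ^ Suc n) = (\<lambda>i. b i * (\<lambda>i. b i ^ n) i)" by simp
  have "N (\<lambda>i. b i * (\<lambda>i. b i ^ n) i) \<le> N b * N (\<lambda>i. b i ^ n)"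
    using N_mult[OF assms] Suc by blast
  also have "\<dots> \<le> N b * N b ^ n"
    using Suc N_nonneg[OF assms] by (intro mult_left_mono) auto
  finally show ?case unfolding e using mult_B[OF assms] Suc by simp
qed

end

context sba begin

lemma cauchy_lim:
  assumes s: "\<And>n. s n \<in> B" and T: "\<And>m n. n \<le> m \<Longrightarrow> N (\<lambda>i. s m i - s n i) \<le> T n"
    and lim: "T \<longlonglongrightarrow> 0"
  shows "\<exists>e\<in>B. (\<lambda>n. N (\<lambda>i. s n i - e i)) \<longlonglongrightarrow> 0"
proof (rule complete)
  show "\<forall>n. s n \<in> B" using s by blast
  show "\<forall>e>0. \<exists>M. \<forall>m\<ge>M. \<forall>n\<ge>M. N (\<lambda>i. s m i - s n i) < e"
  proof (intro allI impI)
    fix e :: real assume e: "e > 0"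
    from lim e obtain M where M: "\<And>n. n \<ge> M \<Longrightarrow> T n < e"
      unfolding lim_sequentially by (metis diff_zero dist_real_def abs_less_iff)
    show "\<exists>M. \<forall>m\<ge>M. \<forall>n\<ge>M. N (\<lambda>i. s m i - s n i) < e"
    proof (intro exI allI impI)
      fix m n assume mn: "m \<ge> M" "n \<ge> M"
      show "N (\<lambda>i. s m i - s n i) < e"
      proof (cases "n \<le> m")
        case True
        then show ?thesis using T[OF True] M[OF mn(2)] by linarith
      next
        case False
        then have mn': "m \<le> n" by simp
        show ?thesis using T[OF mn'] M[OF mn(1)] N_sub_comm[OF s[of m] s[of n]] by linarith
      qed
    qed
  qed
qed

lemma geom_tail:
  fixes r :: real
  assumes "n \<le> m"
  shows "(1 - r) * (\<Sum>k\<in>{n..<m}. r ^ k) = r ^ n - r ^ m"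
  using assms
proof (induction m rule: dec_induct)
  case base
  then show ?case by simp
next
  case (step m)
  have "(1 - r) * (\<Sum>k\<in>{n..<Suc m}. r ^ k) = (1 - r) * (\<Sum>k\<in>{n..<m}. r ^ k) + (1 - r) * r ^ m"
    using step.hyps by (simp add: sum.atLeastLessThan_Suc distrib_left)
  also have "\<dots> = r ^ n - r ^ Suc m" using step.IH by (simp add: algebra_simps)
  finally show ?case .
qed

lemma char_bound:
  assumes a: "a \<in> B" shows "cmod (a i) \<le> N a"
proof (rule ccontr)
  assume "\<not> cmod (a i) \<le> N a"
  then have lt: "N a < cmod (a i)" by simp
  then have ai: "a i \<noteq> 0" using N_nonneg[OF a] by auto
  define b where "b = (\<lambda>j. (1 / a i) * a j)"
  have bB: "b \<in> B" unfolding b_def using a by (rule smult_B)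
  have Nb: "N b = N a / cmod (a i)" unfolding b_def using N_smult[OF a, of "1 / a i"]
    by (simp add: norm_divide)
  define r where "r = N b"
  have r0: "r \<ge> 0" unfolding r_def using N_nonneg[OF bB] .
  have r1: "r < 1" unfolding r_def Nb using lt ai by (simp add: divide_less_eq)
  have bi: "b i = 1" unfolding b_def using ai by simp
  define p where "p n = (\<lambda>j. \<Sum>k\<in>{..<n}. b j ^ k)" for n
  have pB: "p n \<in> B" for n
    unfolding p_def using sum_B[of "{..<n}" "\<lambda>k j. b j ^ k"] pow_B[OF bB] by blast
  have pd: "N (\<lambda>j. p m j - p n j) \<le> r ^ n / (1 - r)" if "n \<le> m" for m n
  proof -
    have e: "(\<lambda>j. p m j - p n j) = (\<lambda>j. \<Sum>k\<in>{n..<m}. b j ^ k)"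
    proof
      fix j
      have "{..<m} = {..<n} \<union> {n..<m}" using that by auto
      then have "(\<Sum>k\<in>{..<m}. b j ^ k) = (\<Sum>k\<in>{..<n}. b j ^ k) + (\<Sum>k\<in>{n..<m}. b j ^ k)"
        by (simp add: sum.union_disjoint ivl_disj_int(2))
      then show "p m j - p n j = (\<Sum>k\<in>{n..<m}. b j ^ k)" unfolding p_def by simp
    qed
    have "N (\<lambda>j. \<Sum>k\<in>{n..<m}. b j ^ k) \<le> (\<Sum>k\<in>{n..<m}. N (\<lambda>j. b j ^ k))"
      using sum_B[of "{n..<m}" "\<lambda>k j. b j ^ k"] pow_B[OF bB] by blast
    also have "\<dots> \<le> (\<Sum>k\<in>{n..<m}. r ^ k)"
      using pow_B[OF bB] unfolding r_def by (intro sum_mono) blast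
    also have "\<dots> = (r ^ n - r ^ m) / (1 - r)"
      using geom_tail[OF that, of r] r1 by (simp add: field_simps)
    also have "\<dots> \<le> r ^ n / (1 - r)"
      using r0 r1 by (intro divide_right_mono) auto
    finally show ?thesis unfolding e .
  qed
  have Tlim: "(\<lambda>n. r ^ n / (1 - r)) \<longlonglongrightarrow> 0"
    using LIMSEQ_power_zero[of r] r0 r1 by (intro tendsto_divide_zero) auto
  obtain e where eB: "e \<in> B" and elim: "(\<lambda>n. N (\<lambda>j. p n j - e j)) \<longlonglongrightarrow> 0"
    using cauchy_lim[OF pB pd Tlim] by blast
  define c where "c = (\<lambda>j. 1 - b j)"
  have cB: "c \<in> B" unfolding c_def using sub_B[OF one_B bB] .
  define q where "q = (\<lambda>j. e j * c j - 1)"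
  have qB: "q \<in> B" unfolding q_def using sub_B[OF mult_B[OF eB cB] one_B] .
  have qbound: "N q \<le> N (\<lambda>j. p n j - e j) * N c + r ^ n" for n
  proof -
    define u where "u = (\<lambda>j. e j - p n j)"
    have uB: "u \<in> B" unfolding u_def using sub_B[OF eB pB] .
    have Nu: "N u = N (\<lambda>j. p n j - e j)" unfolding u_def using N_sub_comm[OF eB pB] .
    have "q = (\<lambda>j. (\<lambda>j. u j * c j) j - (\<lambda>j. b j ^ n) j)"
    proof
      fix j
      have "p n j * c j = 1 - b j ^ n"
        unfolding p_def c_def using one_diff_power_eq[of "b j" n] by (simp add: mult.commute)
      then show "q j = u j * c j - b j ^ n" unfolding q_def u_def by (simp add: algebra_simps)
    qed
    then have "N q \<le> N (\<lambda>j. u j * c j) + N (\<lambda>j. b j ^ n)"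
      using N_sub[OF mult_B[OF uB cB]] pow_B[OF bB] by simp
    also have "\<dots> \<le> N u * N c + r ^ n"
      using N_mult[OF uB cB] pow_B[OF bB] unfolding r_def by (meson add_mono)
    finally show ?thesis unfolding Nu .
  qed
  have "(\<lambda>n. N (\<lambda>j. p n j - e j) * N c + r ^ n) \<longlonglongrightarrow> 0 * N c + 0"
    using elim LIMSEQ_power_zero[of r] r0 r1 by (intro tendsto_intros) auto
  then have "N q \<le> 0" using qbound by (intro LIMSEQ_le_const[where a="N q"]) auto
  then have "N q = 0" using N_nonneg[OF qB] by simp
  then have "q = (\<lambda>_. 0)" using N_zero_iff[OF qB] by simp
  then have "q i = 0" by simp
  moreover have "q i = -1" unfolding q_def c_def bi by simp
  ultimately show False by simp
qed

end


definition Fn :: "nat \<Rightarrow> ('d::finite \<Rightarrow> int) set" where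
  "Fn n = {l. to_nat l < n}"

lemma Fn_finite: "finite (Fn n :: ('d::finite \<Rightarrow> int) set)"
proof -
  have "Fn n = (to_nat -` {..<n} :: ('d \<Rightarrow> int) set)" unfolding Fn_def by auto
  then show ?thesis using finite_vimageI[OF finite_lessThan inj_to_nat, of n] by simp
qed

lemma Fn_mono: "n \<le> m \<Longrightarrow> Fn n \<subseteq> Fn m" unfolding Fn_def by auto

lemma Fn_filterlim: "filterlim Fn (finite_subsets_at_top UNIV) sequentially"
proof (subst filterlim_iff, intro allI impI)
  fix P assume "eventually P (finite_subsets_at_top (UNIV :: ('a \<Rightarrow> int) set))"
  then obtain X where X: "finite X" "\<And>Y. finite Y \<Longrightarrow> X \<subseteq> Y \<Longrightarrow> P Y"
    unfolding eventually_finite_subsets_at_top by auto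
  define n0 where "n0 = Suc (Max (insert 0 (to_nat ` X)))"
  have XF: "X \<subseteq> Fn n" if "n \<ge> n0" for n
  proof
    fix x assume "x \<in> X"
    then have "to_nat x \<le> Max (insert 0 (to_nat ` X))" using X(1) by (intro Max_ge) auto
    then show "x \<in> Fn n" unfolding Fn_def using that n0_def by simp
  qed
  show "eventually (\<lambda>n. P (Fn n)) sequentially"
    unfolding eventually_sequentially
  proof (intro exI allI impI)
    fix n assume "n \<ge> n0"
    show "P (Fn n)" using X(2)[OF Fn_finite XF[OF \<open>n \<ge> n0\<close>]] .
  qed
qed

lemma has_sum_Fn:
  assumes "(g has_sum S) UNIV"
  shows "(\<lambda>n. sum g (Fn n)) \<longlonglongrightarrow> S"
  using filterlim_compose[OF assms[unfolded has_sum_def] Fn_filterlim] .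

context sba begin

lemma series_B:
  fixes f :: "('d \<Rightarrow> int) \<Rightarrow> 'd seq"
  assumes fB: "\<And>l. f l \<in> B" and sN: "(\<lambda>l. N (f l)) summable_on UNIV"
  shows "(\<lambda>l. f l i) summable_on UNIV"
    and "(\<lambda>i. \<Sum>\<^sub>\<infinity>l. f l i) \<in> B \<and> N (\<lambda>i. \<Sum>\<^sub>\<infinity>l. f l i) \<le> (\<Sum>\<^sub>\<infinity>l. N (f l))"
proof -
  have ps: "(\<lambda>l. f l i) summable_on UNIV" for i
  proof -
    have "(\<lambda>l. norm (f l i)) summable_on UNIV"
      by (rule Infinite_Sum.abs_summable_on_comparison_test'[where g="\<lambda>l. N (f l)"]) (use sN char_bound fB in auto)
    then show ?thesis by (rule abs_summable_summable)
  qed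
  then show "(\<lambda>l. f l i) summable_on UNIV" .
  define SN where "SN = (\<Sum>\<^sub>\<infinity>l. N (f l))"
  have Nnn: "N (f l) \<ge> 0" for l using N_nonneg[OF fB] .
  have finle: "(\<Sum>l\<in>F. N (f l)) \<le> SN" if "finite F" for F
    unfolding SN_def by (rule finite_sum_le_infsum[OF sN that]) (auto simp: Nnn)
  define s where "s n = (\<lambda>i. \<Sum>l\<in>Fn n. f l i)" for n
  have sB: "s n \<in> B" and sN': "N (s n) \<le> (\<Sum>l\<in>Fn n. N (f l))" for n
    unfolding s_def using sum_B[where F="Fn n" and f=f] Fn_finite fB by auto
  define T where "T n = SN - (\<Sum>l\<in>Fn n. N (f l))" for n
  have sd: "N (\<lambda>i. s m i - s n i) \<le> T n" if "n \<le> m" for m n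
  proof -
    have sub: "Fn n \<subseteq> Fn m" using Fn_mono[OF that] .
    have e: "(\<lambda>i. s m i - s n i) = (\<lambda>i. \<Sum>l\<in>Fn m - Fn n. f l i)"
    proof
      fix i show "s m i - s n i = (\<Sum>l\<in>Fn m - Fn n. f l i)"
        unfolding s_def using sum_diff[OF Fn_finite sub, of "\<lambda>l. f l i"] by simp
    qed
    have "N (\<lambda>i. \<Sum>l\<in>Fn m - Fn n. f l i) \<le> (\<Sum>l\<in>Fn m - Fn n. N (f l))"
      using sum_B[of "Fn m - Fn n" f] Fn_finite fB by blast
    also have "\<dots> = (\<Sum>l\<in>Fn m. N (f l)) - (\<Sum>l\<in>Fn n. N (f l))"
      using sum_diff[OF Fn_finite sub, of "\<lambda>l. N (f l)"] by simp
    also have "\<dots> \<le> T n" unfolding T_def using finle[OF Fn_finite] by simp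
    finally show ?thesis unfolding e .
  qed
  have Tlim: "T \<longlonglongrightarrow> 0"
  proof -
    have "(\<lambda>n. \<Sum>l\<in>Fn n. N (f l)) \<longlonglongrightarrow> SN"
      unfolding SN_def using sN by (intro has_sum_Fn) (rule has_sum_infsum)
    then have "(\<lambda>n. SN - (\<Sum>l\<in>Fn n. N (f l))) \<longlonglongrightarrow> SN - SN"
      by (intro tendsto_intros)
    then show ?thesis unfolding T_def by simp
  qed
  obtain e where eB: "e \<in> B" and elim: "(\<lambda>n. N (\<lambda>i. s n i - e i)) \<longlonglongrightarrow> 0"
    using cauchy_lim[OF sB sd Tlim] by blast
  have eg: "e = (\<lambda>i. \<Sum>\<^sub>\<infinity>l. f l i)"
  proof
    fix i
    have "(\<lambda>n. s n i - e i) \<longlonglongrightarrow> 0"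
    proof (rule Lim_null_comparison[OF _ elim])
      show "\<forall>\<^sub>F n in sequentially. norm (s n i - e i) \<le> N (\<lambda>i. s n i - e i)"
        using char_bound[OF sub_B[OF sB eB]] by simp
    qed
    then have l1: "(\<lambda>n. s n i) \<longlonglongrightarrow> e i" by (rule LIM_zero_cancel)
    have l2: "(\<lambda>n. s n i) \<longlonglongrightarrow> (\<Sum>\<^sub>\<infinity>l. f l i)"
      unfolding s_def using ps[of i] by (intro has_sum_Fn) (rule has_sum_infsum)
    show "e i = (\<Sum>\<^sub>\<infinity>l. f l i)" using LIMSEQ_unique[OF l1 l2] .
  qed
  have Ne: "N e \<le> SN + N (\<lambda>i. s n i - e i)" for n
  proof -
    have eq: "(\<lambda>i. s n i + (e i - s n i)) = e" by simp
    have "N (\<lambda>i. s n i + (e i - s n i)) \<le> N (s n) + N (\<lambda>i. e i - s n i)"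
      by (rule N_add[OF sB[of n] sub_B[OF eB sB[of n]]])
    then have "N e \<le> N (s n) + N (\<lambda>i. e i - s n i)" unfolding eq .
    also have "\<dots> \<le> SN + N (\<lambda>i. s n i - e i)"
      using sN'[of n] finle[OF Fn_finite, of n] N_sub_comm[OF eB sB] by simp
    finally show ?thesis .
  qed
  have "(\<lambda>n. SN + N (\<lambda>i. s n i - e i)) \<longlonglongrightarrow> SN + 0"
    using elim by (intro tendsto_intros)
  then have "N e \<le> SN + 0" using Ne by (intro LIMSEQ_le_const[where a="N e"]) auto
  then show "(\<lambda>i. \<Sum>\<^sub>\<infinity>l. f l i) \<in> B \<and> N (\<lambda>i. \<Sum>\<^sub>\<infinity>l. f l i) \<le> (\<Sum>\<^sub>\<infinity>l. N (f l))"
    using eB eg SN_def by simp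
qed

end


lemma single_le_infsum:
  fixes f :: "'a \<Rightarrow> real"
  assumes "f summable_on UNIV" "\<And>x. f x \<ge> 0"
  shows "f x \<le> (\<Sum>\<^sub>\<infinity>y. f y)"
  using finite_sum_le_infsum[OF assms(1), of "{x}"] assms(2) by simp

lemma summable_on_cdivide:
  fixes f :: "'a \<Rightarrow> real"
  shows "f summable_on A \<Longrightarrow> (\<lambda>x. f x / c) summable_on A"
  unfolding divide_inverse by (rule summable_on_cmult_left)

lemma infsum_cdivide:
  fixes f :: "'a \<Rightarrow> real"
  shows "(\<Sum>\<^sub>\<infinity>x\<in>A. f x / c) = (\<Sum>\<^sub>\<infinity>x\<in>A. f x) / c"
  unfolding divide_inverse by (rule infsum_cmult_left')

lemma wcs:
  fixes a c :: "'a \<Rightarrow> real"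
  assumes a0: "\<And>l. a l \<ge> 0" and c0: "\<And>l. c l \<ge> 0"
    and as: "a summable_on UNIV" and acs: "(\<lambda>l. a l * (c l)\<^sup>2) summable_on UNIV"
  shows "(\<lambda>l. a l * c l) summable_on UNIV"
    and "(\<Sum>\<^sub>\<infinity>l. a l * c l)\<^sup>2 \<le> (\<Sum>\<^sub>\<infinity>l. a l) * (\<Sum>\<^sub>\<infinity>l. a l * (c l)\<^sup>2)"
proof -
  have h1: "(\<lambda>l. (a l + a l * (c l)\<^sup>2) / 2) summable_on UNIV"
    using summable_on_add[OF as acs] by (intro summable_on_cdivide)
  have le1: "a l * c l \<le> (a l + a l * (c l)\<^sup>2) / 2" for l
  proof -
    have "2 * c l \<le> 1 + (c l)\<^sup>2" using sum_squares_bound[of "c l" 1] by (simp add: power2_eq_square)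
    then have "a l * (2 * c l) \<le> a l * (1 + (c l)\<^sup>2)" using a0 by (intro mult_left_mono) auto
    then show ?thesis by (simp add: algebra_simps)
  qed
  show acsum: "(\<lambda>l. a l * c l) summable_on UNIV"
    by (rule summable_on_comparison_test[OF h1]) (use le1 a0 c0 in auto)
  define A where "A = (\<Sum>\<^sub>\<infinity>l. a l)"
  define C where "C = (\<Sum>\<^sub>\<infinity>l. a l * (c l)\<^sup>2)"
  define M where "M = (\<Sum>\<^sub>\<infinity>l. a l * c l)"
  have A0: "A \<ge> 0" unfolding A_def using a0 by (intro infsum_nonneg) auto
  have C0: "C \<ge> 0" unfolding C_def using a0 by (intro infsum_nonneg) auto
  have M0: "M \<ge> 0" unfolding M_def using a0 c0 by (intro infsum_nonneg) auto
  have key: "2 * M \<le> t * A + C / t" if t: "t > 0" for t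
  proof -
    have pt: "2 * (a l * c l) \<le> t * a l + a l * (c l)\<^sup>2 / t" for l
    proof -
      have "0 \<le> (t - c l)\<^sup>2 / t" using t by simp
      then have "2 * c l \<le> t + (c l)\<^sup>2 / t" using t by (simp add: power2_eq_square field_simps)
      then have "a l * (2 * c l) \<le> a l * (t + (c l)\<^sup>2 / t)" using a0 by (intro mult_left_mono) auto
      then show ?thesis by (simp add: algebra_simps)
    qed
    have s1: "(\<lambda>l. 2 * (a l * c l)) summable_on UNIV" using acsum by (intro summable_on_cmult_right)
    have s2a: "(\<lambda>l. t * a l) summable_on UNIV" using as by (intro summable_on_cmult_right)
    have s2b: "(\<lambda>l. a l * (c l)\<^sup>2 / t) summable_on UNIV" using acs by (intro summable_on_cdivide)
    have "2 * M = (\<Sum>\<^sub>\<infinity>l. 2 * (a l * c l))" unfolding M_def by (simp add: infsum_cmult_right')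
    also have "\<dots> \<le> (\<Sum>\<^sub>\<infinity>l. t * a l + a l * (c l)\<^sup>2 / t)"
      using s1 summable_on_add[OF s2a s2b] pt by (intro infsum_mono) auto
    also have "\<dots> = (\<Sum>\<^sub>\<infinity>l. t * a l) + (\<Sum>\<^sub>\<infinity>l. a l * (c l)\<^sup>2 / t)"
      using s2a s2b by (rule infsum_add)
    also have "\<dots> = t * A + C / t" unfolding A_def C_def
      by (simp add: infsum_cmult_right' infsum_cdivide)
    finally show ?thesis .
  qed
  have "M\<^sup>2 \<le> A * C"
  proof (cases "M = 0")
    case True then show ?thesis using A0 C0 by simp
  next
    case False
    then have Mp: "M > 0" using M0 by simp
    show ?thesis
    proof (cases "A = 0")
      case True
      have "2 * M \<le> ((C + 1) / M) * A + C / ((C + 1) / M)" using key[of "(C + 1) / M"] Mp C0 by simp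
      then have "2 * M \<le> C * M / (C + 1)" using True C0 by (simp add: field_simps)
      also have "\<dots> < M" using Mp C0 by (simp add: field_simps)
      finally show ?thesis using Mp by simp
    next
      case False
      then have Ap: "A > 0" using A0 by simp
      have "2 * M \<le> (M / A) * A + C / (M / A)" using key[of "M / A"] Mp Ap by simp
      then have "2 * M \<le> M + C * A / M" using Ap by (simp add: field_simps)
      then have "M \<le> C * A / M" by simp
      then have "M * M \<le> C * A" using Mp by (simp add: field_simps)
      then show ?thesis by (simp add: power2_eq_square mult.commute)
    qed
  qed
  then show "(\<Sum>\<^sub>\<infinity>l. a l * c l)\<^sup>2 \<le> (\<Sum>\<^sub>\<infinity>l. a l) * (\<Sum>\<^sub>\<infinity>l. a l * (c l)\<^sup>2)"
    unfolding A_def C_def M_def .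
qed



definition dm :: "('d \<Rightarrow> int) \<Rightarrow> ('d \<Rightarrow> int) \<Rightarrow> ('d \<Rightarrow> int)" where
  "dm k l = (\<lambda>v. k v - l v)"

lemma dm_dm[simp]: "dm k (dm k l) = l" unfolding dm_def by simp

lemma bij_dm1: "bij_betw (dm k) UNIV UNIV"
  by (rule bij_betw_byWitness[where f'="dm k"]) auto

lemma bij_dm2: "bij_betw (\<lambda>k. dm k l) UNIV UNIV"
proof (rule bij_betw_byWitness[where f'="\<lambda>m. (\<lambda>v. m v + l v)"])
  show "\<forall>a\<in>UNIV. (\<lambda>v. dm a l v + l v) = a" unfolding dm_def by simp
  show "\<forall>a'\<in>UNIV. dm (\<lambda>v. a' v + l v) l = a'" unfolding dm_def by simp
qed auto

lemma young:
  fixes a b :: "('d \<Rightarrow> int) \<Rightarrow> real"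
  assumes a0: "\<And>l. a l \<ge> 0" and b0: "\<And>m. b m \<ge> 0"
    and as: "a summable_on UNIV" and bs: "(\<lambda>m. (b m)\<^sup>2) summable_on UNIV"
  shows "(\<lambda>l. a l * b (dm k l)) summable_on UNIV"
    and "(\<lambda>k. (\<Sum>\<^sub>\<infinity>l. a l * b (dm k l))\<^sup>2) summable_on UNIV"
    and "(\<Sum>\<^sub>\<infinity>k. (\<Sum>\<^sub>\<infinity>l. a l * b (dm k l))\<^sup>2) \<le> (\<Sum>\<^sub>\<infinity>l. a l)\<^sup>2 * (\<Sum>\<^sub>\<infinity>m. (b m)\<^sup>2)"
proof -
  define Q where "Q = (\<Sum>\<^sub>\<infinity>m. (b m)\<^sup>2)"
  define A where "A = (\<Sum>\<^sub>\<infinity>l. a l)"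
  have A0: "A \<ge> 0" unfolding A_def using a0 by (intro infsum_nonneg) auto
  have bQ: "(b m)\<^sup>2 \<le> Q" for m unfolding Q_def by (rule single_le_infsum[OF bs]) simp
  have shiftsum: "((\<lambda>k. (b (dm k l))\<^sup>2) has_sum Q) UNIV" for l
    using has_sum_reindex_bij_betw[OF bij_dm2[of l], of "\<lambda>m. (b m)\<^sup>2" Q] bs
    unfolding Q_def by (simp add: has_sum_infsum)
  have inner: "(\<lambda>l. a l * (b (dm k l))\<^sup>2) summable_on UNIV" for k
    by (rule summable_on_comparison_test[OF summable_on_cmult_left[OF as, of Q]])
       (use a0 bQ in \<open>auto intro: mult_left_mono\<close>)
  have w: "(\<lambda>l. a l * b (dm k l)) summable_on UNIV"
       "(\<Sum>\<^sub>\<infinity>l. a l * b (dm k l))\<^sup>2 \<le> A * (\<Sum>\<^sub>\<infinity>l. a l * (b (dm k l))\<^sup>2)" for k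
    using wcs[OF a0 b0 as inner[of k]] unfolding A_def by auto
  then show "(\<lambda>l. a l * b (dm k l)) summable_on UNIV" by blast
  define h where "h = (\<lambda>(l, k). a l * (b (dm k l))\<^sup>2)"
  have hs: "h summable_on Sigma UNIV (\<lambda>_. UNIV)"
  proof (rule summable_on_SigmaI[where g="\<lambda>l. a l * Q"])
    show "((\<lambda>k. h (l, k)) has_sum a l * Q) UNIV" for l
      unfolding h_def using has_sum_cmult_right[OF shiftsum[of l], of "a l"] by simp
    show "(\<lambda>l. a l * Q) summable_on UNIV" using as by (rule summable_on_cmult_left)
    show "0 \<le> h (l, k)" for l k unfolding h_def using a0 by simp
  qed
  have hs': "(\<lambda>(l, k). a l * (b (dm k l))\<^sup>2) summable_on UNIV \<times> UNIV"
    using hs unfolding h_def by simp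
  have swapped: "(\<lambda>(k, l). a l * (b (dm k l))\<^sup>2) summable_on UNIV \<times> UNIV"
    using hs' summable_on_swap[of "\<lambda>(l, k). a l * (b (dm k l))\<^sup>2" UNIV UNIV] by simp
  have Is: "(\<lambda>k. \<Sum>\<^sub>\<infinity>l. a l * (b (dm k l))\<^sup>2) summable_on UNIV"
    using summable_on_SigmaD[OF swapped[unfolded case_prod_unfold]] inner by simp
  have Isum: "(\<Sum>\<^sub>\<infinity>k. \<Sum>\<^sub>\<infinity>l. a l * (b (dm k l))\<^sup>2) = A * Q"
  proof -
    have "(\<Sum>\<^sub>\<infinity>k. \<Sum>\<^sub>\<infinity>l. a l * (b (dm k l))\<^sup>2) = (\<Sum>\<^sub>\<infinity>l. \<Sum>\<^sub>\<infinity>k. a l * (b (dm k l))\<^sup>2)"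
      using infsum_swap_banach[OF swapped] by simp
    also have "\<dots> = (\<Sum>\<^sub>\<infinity>l. a l * Q)"
    proof (rule infsum_cong)
      fix l
      have "(\<Sum>\<^sub>\<infinity>k. (b (dm k l))\<^sup>2) = Q" using shiftsum[of l] by (rule infsumI)
      then show "(\<Sum>\<^sub>\<infinity>k. a l * (b (dm k l))\<^sup>2) = a l * Q" by (simp add: infsum_cmult_right')
    qed
    also have "\<dots> = A * Q" unfolding A_def by (simp add: infsum_cmult_left')
    finally show ?thesis .
  qed
  have AIs: "(\<lambda>k. A * (\<Sum>\<^sub>\<infinity>l. a l * (b (dm k l))\<^sup>2)) summable_on UNIV"
    using Is by (rule summable_on_cmult_right)
  show cs: "(\<lambda>k. (\<Sum>\<^sub>\<infinity>l. a l * b (dm k l))\<^sup>2) summable_on UNIV"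
    by (rule summable_on_comparison_test[OF AIs]) (use w in auto)
  have "(\<Sum>\<^sub>\<infinity>k. (\<Sum>\<^sub>\<infinity>l. a l * b (dm k l))\<^sup>2) \<le> (\<Sum>\<^sub>\<infinity>k. A * (\<Sum>\<^sub>\<infinity>l. a l * (b (dm k l))\<^sup>2))"
    using cs AIs w by (intro infsum_mono) auto
  also have "\<dots> = A * (A * Q)" using Isum by (simp add: infsum_cmult_right')
  finally show "(\<Sum>\<^sub>\<infinity>k. (\<Sum>\<^sub>\<infinity>l. a l * b (dm k l))\<^sup>2) \<le> (\<Sum>\<^sub>\<infinity>l. a l)\<^sup>2 * (\<Sum>\<^sub>\<infinity>m. (b m)\<^sup>2)"
    unfolding A_def Q_def by (simp add: power2_eq_square)
qed



lemma supnorm_ge: "\<bar>k v\<bar> \<le> supnorm_idx (k :: 'd::finite \<Rightarrow> int)"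
  unfolding supnorm_idx_def by (rule Max_ge) auto

lemma jbr_ge1: "jbr k \<ge> 1" unfolding jbr_def by simp

lemma jbr_pos: "jbr k > 0" using jbr_ge1[of k] by simp

lemma jbr_comp: "real_of_int (max 1 \<bar>k v\<bar>) \<le> jbr (k :: 'd::finite \<Rightarrow> int)"
  unfolding jbr_def using supnorm_ge[of k v] by simp

lemma jbr_tri: "jbr (k :: 'd::finite \<Rightarrow> int) \<le> jbr l + jbr (dm k l)"
proof -
  have "supnorm_idx k \<le> supnorm_idx l + supnorm_idx (dm k l)"
    unfolding supnorm_idx_def[of k]
  proof (subst Max_le_iff, simp, simp, intro ballI)
    fix x assume "x \<in> range (\<lambda>v. \<bar>k v\<bar>)"
    then obtain v where x: "x = \<bar>k v\<bar>" by auto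
    have "\<bar>k v\<bar> \<le> \<bar>l v\<bar> + \<bar>dm k l v\<bar>" unfolding dm_def by simp
    also have "\<dots> \<le> supnorm_idx l + supnorm_idx (dm k l)"
      using supnorm_ge[of l v] supnorm_ge[of "dm k l" v] by simp
    finally show "x \<le> supnorm_idx l + supnorm_idx (dm k l)" using x by simp
  qed
  then show ?thesis unfolding jbr_def by simp
qed

definition gz :: "real \<Rightarrow> int \<Rightarrow> real" where
  "gz p n = real_of_int (max 1 \<bar>n\<bar>) powr (-p)"

lemma gz_pos: "gz p n > 0" unfolding gz_def by simp

lemma gz_summable:
  assumes p: "p > 1"
  shows "gz p summable_on UNIV"
proof -
  have "summable (\<lambda>n. real n powr (-p))" using p by (simp add: summable_real_powr_iff)
  moreover have ev: "\<forall>\<^sub>F n in sequentially. gz p (int n) = real n powr (-p)"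
    unfolding eventually_sequentially gz_def by (intro exI[of _ 1]) auto
  ultimately have "summable (\<lambda>n. gz p (int n))" using summable_cong[OF ev] by simp
  then have s1: "(\<lambda>n. gz p (int n)) summable_on UNIV"
    using gz_pos by (intro summable_nonneg_imp_summable_on) (auto intro: less_imp_le)
  have a: "gz p summable_on range int"
    using s1 summable_on_reindex[of int UNIV "gz p"] by (simp add: o_def)
  have e: "gz p (- int n) = gz p (int n)" for n unfolding gz_def by simp
  have "inj (\<lambda>n::nat. - int n)" by (auto intro: injI)
  then have b: "gz p summable_on range (\<lambda>n. - int n)"
    using s1 summable_on_reindex[of "\<lambda>n::nat. - int n" UNIV "gz p"] by (simp add: o_def e)
  have U: "(UNIV :: int set) = range int \<union> range (\<lambda>n. - int n)"
  proof (rule set_eqI, simp)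
    fix z :: int
    show "z \<in> range int \<or> z \<in> range (\<lambda>n. - int n)"
    proof (cases "z \<ge> 0")
      case True then have "z = int (nat z)" by simp
      then show ?thesis by blast
    next
      case False then have "z = - int (nat (- z))" by simp
      then show ?thesis by blast
    qed
  qed
  show ?thesis by (subst U) (rule summable_on_union[OF a b])
qed

lemma S_summable:
  assumes "\<alpha>0 > real CARD('d::finite) / 2"
  shows "(\<lambda>k::'d \<Rightarrow> int. jbr k powr (-2 * \<alpha>0)) summable_on UNIV"
proof -
  define d where "d = CARD('d)"
  have d0: "d > 0" unfolding d_def by simp
  define p where "p = 2 * \<alpha>0 / real d"
  have p1: "p > 1" unfolding p_def using assms d0 by (simp add: d_def field_simps)
  define G where "G = (\<lambda>k::'d \<Rightarrow> int. \<Prod>v\<in>UNIV. gz p (k v))"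
  have gabs: "(\<lambda>n. norm (gz p n)) summable_on UNIV"
    using gz_summable[OF p1] gz_pos by (simp add: abs_of_pos less_imp_le)
  have "infsum G (PiE UNIV (\<lambda>_. UNIV)) = (\<Prod>v\<in>(UNIV::'d set). infsum (gz p) UNIV)"
    unfolding G_def using infsum_prod_PiE_abs[where f="\<lambda>_. gz p" and A="UNIV :: 'd set" and B="\<lambda>_. UNIV"] gabs by simp
  then have Gsum: "infsum G UNIV = (infsum (gz p) UNIV) ^ d" by (simp add: d_def)
  have "gz p 0 \<le> infsum (gz p) UNIV"
    by (rule single_le_infsum[OF gz_summable[OF p1]]) (simp add: gz_pos less_imp_le)
  then have "infsum (gz p) UNIV > 0" using gz_pos[of p 0] by simp
  then have "infsum G UNIV \<noteq> 0" using Gsum by simp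
  then have Gs: "G summable_on UNIV" using infsum_not_exists by blast
  show ?thesis
  proof (rule summable_on_comparison_test[OF Gs])
    fix k :: "'d \<Rightarrow> int"
    show "0 \<le> jbr k powr (-2 * \<alpha>0)" by simp
    have "jbr k powr (-2 * \<alpha>0) = (jbr k powr (-p)) powr (real d)"
      unfolding powr_powr p_def using d0 by simp
    also have "\<dots> = (jbr k powr (-p)) ^ d" using jbr_pos[of k] by (simp add: powr_realpow)
    also have "\<dots> = (\<Prod>v\<in>(UNIV::'d set). jbr k powr (-p))" by (simp add: d_def)
    also have "\<dots> \<le> G k" unfolding G_def gz_def
    proof (rule prod_mono, intro conjI)
      fix v
      show "0 \<le> jbr k powr (-p)" by simp
      show "jbr k powr (-p) \<le> real_of_int (max 1 \<bar>k v\<bar>) powr (-p)"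
        using p1 jbr_comp[of k v] by (intro powr_mono2') auto
    qed
    finally show "jbr k powr (-2 * \<alpha>0) \<le> G k" .
  qed
qed



lemma sq_powr: "(x::real) > 0 \<Longrightarrow> (x powr s)\<^sup>2 = x powr (2 * s)"
  by (simp add: power2_eq_square powr_add[symmetric])

lemma powr_cancel: "(x::real) > 0 \<Longrightarrow> x powr (- t) * x powr t = 1"
  by (simp add: powr_add[symmetric])

lemma l1_bound:
  fixes x :: "('d::finite \<Rightarrow> int) \<Rightarrow> real"
  assumes x0: "\<And>l. x l \<ge> 0"
    and Ss: "(\<lambda>k::'d \<Rightarrow> int. jbr k powr (-2 * \<alpha>0)) summable_on UNIV"
    and xs: "(\<lambda>l. (x l)\<^sup>2 * jbr l powr (2 * \<alpha>0)) summable_on UNIV"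
  shows "x summable_on UNIV"
    and "(\<Sum>\<^sub>\<infinity>l. x l)\<^sup>2 \<le> (\<Sum>\<^sub>\<infinity>k::'d \<Rightarrow> int. jbr k powr (-2 * \<alpha>0)) * (\<Sum>\<^sub>\<infinity>l. (x l)\<^sup>2 * jbr l powr (2 * \<alpha>0))"
proof -
  define a where "a l = jbr l powr (-2 * \<alpha>0)" for l :: "'d \<Rightarrow> int"
  define c where "c l = x l * jbr l powr (2 * \<alpha>0)" for l :: "'d \<Rightarrow> int"
  have ac: "(\<lambda>l. a l * c l) = x"
  proof
    fix l
    have "a l * c l = x l * (jbr l powr (- (2 * \<alpha>0)) * jbr l powr (2 * \<alpha>0))"
      unfolding a_def c_def by (simp add: algebra_simps)
    then show "a l * c l = x l" using powr_cancel[OF jbr_pos[of l], of "2 * \<alpha>0"] by simp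
  qed
  have acc: "(\<lambda>l. a l * (c l)\<^sup>2) = (\<lambda>l. (x l)\<^sup>2 * jbr l powr (2 * \<alpha>0))"
  proof
    fix l
    have "a l * (c l)\<^sup>2 = (x l)\<^sup>2 * jbr l powr (2 * \<alpha>0) * (jbr l powr (- (2 * \<alpha>0)) * jbr l powr (2 * \<alpha>0))"
      unfolding a_def c_def by (simp add: algebra_simps power2_eq_square)
    then show "a l * (c l)\<^sup>2 = (x l)\<^sup>2 * jbr l powr (2 * \<alpha>0)"
      using powr_cancel[OF jbr_pos[of l], of "2 * \<alpha>0"] by simp
  qed
  have a0: "a l \<ge> 0" for l unfolding a_def by simp
  have c0: "c l \<ge> 0" for l unfolding c_def using x0 by simp
  have as: "a summable_on UNIV" unfolding a_def using Ss .
  have acs: "(\<lambda>l. a l * (c l)\<^sup>2) summable_on UNIV" unfolding acc using xs .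
  note w = wcs[OF a0 c0 as acs]
  show "x summable_on UNIV" using w(1) unfolding ac .
  show "(\<Sum>\<^sub>\<infinity>l. x l)\<^sup>2 \<le> (\<Sum>\<^sub>\<infinity>k::'d \<Rightarrow> int. jbr k powr (-2 * \<alpha>0)) * (\<Sum>\<^sub>\<infinity>l. (x l)\<^sup>2 * jbr l powr (2 * \<alpha>0))"
  proof -
    have e1: "(\<Sum>\<^sub>\<infinity>l. a l * c l) = (\<Sum>\<^sub>\<infinity>l. x l)" using ac by simp
    have e2: "(\<Sum>\<^sub>\<infinity>l. a l * (c l)\<^sup>2) = (\<Sum>\<^sub>\<infinity>l. (x l)\<^sup>2 * jbr l powr (2 * \<alpha>0))" using acc by simp
    have e3: "(\<Sum>\<^sub>\<infinity>l. a l) = (\<Sum>\<^sub>\<infinity>k::'d \<Rightarrow> int. jbr k powr (-2 * \<alpha>0))" unfolding a_def by simp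
    show ?thesis using w(2) unfolding e1 e2 e3 .
  qed
qed

lemma PT:
  fixes k l :: "'d::finite \<Rightarrow> int" and s :: real
  assumes s: "s > 0"
  shows "jbr k powr s \<le> sqrt 10 * jbr (dm k l) powr s + (1 - 10 powr (-1 / (2 * s))) powr (-s) * jbr l powr s"
proof -
  define t where "t = 10 powr (-1 / (2 * s))"
  define c where "c = 1 - t"
  have t0: "t > 0" unfolding t_def by simp
  have t1: "t < 1"
  proof -
    have "1 < 10 powr (1 / (2 * s))" using s by (intro gr_one_powr) auto
    moreover have "t = inverse (10 powr (1 / (2 * s)))" unfolding t_def by (simp add: powr_minus[symmetric])
    ultimately show ?thesis by (simp add: inverse_less_1_iff)
  qed
  have c0: "c > 0" "c < 1" unfolding c_def using t0 t1 by auto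
  define K where "K = jbr k"
  define L where "L = jbr l"
  define D where "D = jbr (dm k l)"
  have K0: "K > 0" and L0: "L > 0" and D0: "D > 0" unfolding K_def L_def D_def by (auto intro: jbr_pos)
  have tri: "K \<le> L + D" unfolding K_def L_def D_def by (rule jbr_tri)
  have nn1: "sqrt 10 * D powr s \<ge> 0" by simp
  have nn2: "c powr (-s) * L powr s \<ge> 0" by simp
  show ?thesis
  proof (cases "L \<ge> c * K")
    case True
    have "K \<le> L / c" using True c0 by (simp add: field_simps)
    then have "K powr s \<le> (L / c) powr s" using K0 s by (intro powr_mono2) auto
    also have "\<dots> = L powr s / c powr s" using c0 L0 powr_divide[of L c s] by simp
    also have "\<dots> = c powr (-s) * L powr s" by (simp add: powr_minus divide_inverse mult.commute)
    finally show ?thesis using nn1 unfolding K_def L_def D_def c_def t_def by linarith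
  next
    case False
    then have "D > t * K" using tri unfolding c_def by (simp add: algebra_simps)
    then have "(t * K) powr s \<le> D powr s" using t0 K0 s by (intro powr_mono2) auto
    moreover have "(t * K) powr s = 10 powr (-1/2) * K powr s"
      unfolding t_def using s by (simp add: powr_mult powr_powr)
    ultimately have h: "10 powr (-1/2) * K powr s \<le> D powr s" by simp
    have m: "10 powr (1/2) * (10 powr (-1/2) * K powr s) \<le> 10 powr (1/2) * D powr s"
      using h by (intro mult_left_mono) auto
    have eq: "10 powr (1/2) * (10 powr (-1/2) * K powr s) = K powr s"
      by (simp add: mult.assoc[symmetric] powr_add[symmetric])
    have sq: "10 powr (1/2) = sqrt 10" by (simp add: powr_half_sqrt)
    have "K powr s \<le> 10 powr (1/2) * D powr s" using m unfolding eq .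
    then have "K powr s \<le> sqrt 10 * D powr s" unfolding sq .
    then show ?thesis using nn2 unfolding K_def L_def D_def c_def t_def by linarith
  qed
qed



lemma weight_mono:
  fixes x :: "('d::finite \<Rightarrow> int) \<Rightarrow> real"
  assumes "(\<lambda>l. (x l)\<^sup>2 * jbr l powr (2 * s)) summable_on UNIV" "t \<le> s"
  shows "(\<lambda>l. (x l)\<^sup>2 * jbr l powr (2 * t)) summable_on UNIV"
proof (rule summable_on_comparison_test[OF assms(1)])
  fix l :: "'d \<Rightarrow> int"
  show "(x l)\<^sup>2 * jbr l powr (2 * t) \<le> (x l)\<^sup>2 * jbr l powr (2 * s)"
    using assms(2) jbr_ge1[of l] by (intro mult_left_mono powr_mono) auto
  show "0 \<le> (x l)\<^sup>2 * jbr l powr (2 * t)" by simp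
qed

lemma sq_summable:
  fixes x :: "('d::finite \<Rightarrow> int) \<Rightarrow> real"
  assumes "(\<lambda>l. (x l)\<^sup>2 * jbr l powr (2 * s)) summable_on UNIV" "s \<ge> 0"
  shows "(\<lambda>l. (x l)\<^sup>2) summable_on UNIV"
proof (rule summable_on_comparison_test[OF assms(1)])
  fix l :: "'d \<Rightarrow> int"
  have "1 \<le> jbr l powr (2 * s)" using assms(2) jbr_ge1[of l] by (intro ge_one_powr_ge_zero) auto
  then show "(x l)\<^sup>2 \<le> (x l)\<^sup>2 * jbr l powr (2 * s)"
    using mult_left_mono[of 1 "jbr l powr (2 * s)" "(x l)\<^sup>2"] by simp
  show "0 \<le> (x l)\<^sup>2" by simp
qed

lemma tilde_sq:
  fixes x :: "('d::finite \<Rightarrow> int) \<Rightarrow> real"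
  shows "(\<lambda>l. (x l * jbr l powr s)\<^sup>2) = (\<lambda>l. (x l)\<^sup>2 * jbr l powr (2 * s))"
  by (rule ext) (simp add: power_mult_distrib sq_powr[OF jbr_pos])

lemma main_real:
  fixes x y :: "('d::finite \<Rightarrow> int) \<Rightarrow> real" and s \<alpha>0 :: real
  assumes x0: "\<And>l. x l \<ge> 0" and y0: "\<And>l. y l \<ge> 0"
    and s0: "s > 0" and as: "\<alpha>0 \<le> s"
    and Ss: "(\<lambda>k::'d \<Rightarrow> int. jbr k powr (-2 * \<alpha>0)) summable_on UNIV"
    and xs: "(\<lambda>l. (x l)\<^sup>2 * jbr l powr (2 * s)) summable_on UNIV"
    and ys: "(\<lambda>l. (y l)\<^sup>2 * jbr l powr (2 * s)) summable_on UNIV"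
  shows "(\<lambda>l. x l * y (dm k l)) summable_on UNIV"
    and "(\<lambda>k. (\<Sum>\<^sub>\<infinity>l. x l * y (dm k l))\<^sup>2 * jbr k powr (2 * s)) summable_on UNIV"
    and "sqrt (\<Sum>\<^sub>\<infinity>k. (\<Sum>\<^sub>\<infinity>l. x l * y (dm k l))\<^sup>2 * jbr k powr (2 * s)) \<le>
      sqrt (20 * (\<Sum>\<^sub>\<infinity>k::'d\<Rightarrow>int. jbr k powr (-2 * \<alpha>0)))
        * sqrt (\<Sum>\<^sub>\<infinity>l. (x l)\<^sup>2 * jbr l powr (2 * \<alpha>0)) * sqrt (\<Sum>\<^sub>\<infinity>l. (y l)\<^sup>2 * jbr l powr (2 * s))
    + (1 - 10 powr (-1 / (2 * s))) powr (-s) * sqrt (2 * (\<Sum>\<^sub>\<infinity>k::'d\<Rightarrow>int. jbr k powr (-2 * \<alpha>0)))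
        * sqrt (\<Sum>\<^sub>\<infinity>l. (x l)\<^sup>2 * jbr l powr (2 * s)) * sqrt (\<Sum>\<^sub>\<infinity>l. (y l)\<^sup>2 * jbr l powr (2 * \<alpha>0))"
proof -
  define S where "S = (\<Sum>\<^sub>\<infinity>k::'d\<Rightarrow>int. jbr k powr (-2 * \<alpha>0))"
  define C where "C = (1 - 10 powr (-1 / (2 * s))) powr (-s)"
  define XA where "XA = (\<Sum>\<^sub>\<infinity>l. (x l)\<^sup>2 * jbr l powr (2 * \<alpha>0))"
  define YA where "YA = (\<Sum>\<^sub>\<infinity>l. (y l)\<^sup>2 * jbr l powr (2 * \<alpha>0))"
  define XS where "XS = (\<Sum>\<^sub>\<infinity>l. (x l)\<^sup>2 * jbr l powr (2 * s))"
  define YS where "YS = (\<Sum>\<^sub>\<infinity>l. (y l)\<^sup>2 * jbr l powr (2 * s))"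
  have S0: "S \<ge> 0" unfolding S_def by (intro infsum_nonneg) auto
  have C0: "C \<ge> 0" unfolding C_def by simp
  have XA0: "XA \<ge> 0" unfolding XA_def by (intro infsum_nonneg) auto
  have YA0: "YA \<ge> 0" unfolding YA_def by (intro infsum_nonneg) auto
  have XS0: "XS \<ge> 0" unfolding XS_def by (intro infsum_nonneg) auto
  have YS0: "YS \<ge> 0" unfolding YS_def by (intro infsum_nonneg) auto
  have xa: "(\<lambda>l. (x l)\<^sup>2 * jbr l powr (2 * \<alpha>0)) summable_on UNIV" by (rule weight_mono[OF xs as])
  have ya: "(\<lambda>l. (y l)\<^sup>2 * jbr l powr (2 * \<alpha>0)) summable_on UNIV" by (rule weight_mono[OF ys as])
  note lx = l1_bound[OF x0 Ss xa]
  note ly = l1_bound[OF y0 Ss ya]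
  have y2: "(\<lambda>l. (y l)\<^sup>2) summable_on UNIV" using sq_summable[OF ys] s0 by simp
  define Xt where "Xt l = x l * jbr l powr s" for l :: "'d \<Rightarrow> int"
  define Yt where "Yt l = y l * jbr l powr s" for l :: "'d \<Rightarrow> int"
  have Xt0: "Xt l \<ge> 0" for l unfolding Xt_def using x0 by simp
  have Yt0: "Yt l \<ge> 0" for l unfolding Yt_def using y0 by simp
  have Xt2: "(\<lambda>l. (Xt l)\<^sup>2) = (\<lambda>l. (x l)\<^sup>2 * jbr l powr (2 * s))" unfolding Xt_def by (rule tilde_sq)
  have Yt2: "(\<lambda>l. (Yt l)\<^sup>2) = (\<lambda>l. (y l)\<^sup>2 * jbr l powr (2 * s))" unfolding Yt_def by (rule tilde_sq)
  have Xt2s: "(\<lambda>l. (Xt l)\<^sup>2) summable_on UNIV" unfolding Xt2 by (rule xs)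
  have Yt2s: "(\<lambda>l. (Yt l)\<^sup>2) summable_on UNIV" unfolding Yt2 by (rule ys)
  have Xt2v: "(\<Sum>\<^sub>\<infinity>l. (Xt l)\<^sup>2) = XS" unfolding XS_def Xt2 ..
  have Yt2v: "(\<Sum>\<^sub>\<infinity>l. (Yt l)\<^sup>2) = YS" unfolding YS_def Yt2 ..
  note Z = young[OF x0 y0 lx(1) y2]
  note U = young[OF x0 Yt0 lx(1) Yt2s]
  note V = young[OF y0 Xt0 ly(1) Xt2s]
  show zs: "(\<lambda>l. x l * y (dm k l)) summable_on UNIV" for k by (rule Z(1))
  define z where "z k = (\<Sum>\<^sub>\<infinity>l. x l * y (dm k l))" for k
  define u where "u k = (\<Sum>\<^sub>\<infinity>l. x l * Yt (dm k l))" for k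
  define v where "v k = (\<Sum>\<^sub>\<infinity>l. y l * Xt (dm k l))" for k
  have z0: "z k \<ge> 0" for k unfolding z_def using x0 y0 by (intro infsum_nonneg) auto
  have u0: "u k \<ge> 0" for k unfolding u_def using x0 Yt0 by (intro infsum_nonneg) auto
  have v0: "v k \<ge> 0" for k unfolding v_def using y0 Xt0 by (intro infsum_nonneg) auto
  have pw: "z k * jbr k powr s \<le> sqrt 10 * u k + C * v k" for k
  proof -
    define f where "f l = Xt l * y (dm k l)" for l
    have fr: "(\<lambda>l. f (dm k l)) = (\<lambda>l. y l * Xt (dm k l))" unfolding f_def by (auto simp: mult.commute)
    have fs: "f summable_on UNIV"
      using summable_on_reindex_bij_betw[OF bij_dm1[of k], of f] V(1)[of k] unfolding fr by simp
    have fv: "(\<Sum>\<^sub>\<infinity>l. f l) = v k"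
      using infsum_reindex_bij_betw[OF bij_dm1[of k], of f] unfolding fr v_def by simp
    have s1: "(\<lambda>l. x l * y (dm k l) * jbr k powr s) summable_on UNIV"
      by (rule summable_on_cmult_left[OF zs])
    have s2: "(\<lambda>l. sqrt 10 * (x l * Yt (dm k l))) summable_on UNIV"
      by (rule summable_on_cmult_right[OF U(1)])
    have s3: "(\<lambda>l. C * f l) summable_on UNIV" by (rule summable_on_cmult_right[OF fs])
    have "z k * jbr k powr s = (\<Sum>\<^sub>\<infinity>l. x l * y (dm k l) * jbr k powr s)"
      unfolding z_def by (simp add: infsum_cmult_left')
    also have "\<dots> \<le> (\<Sum>\<^sub>\<infinity>l. sqrt 10 * (x l * Yt (dm k l)) + C * f l)"
    proof (rule infsum_mono[OF s1 summable_on_add[OF s2 s3]])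
      fix l :: "'d \<Rightarrow> int"
      have "x l * y (dm k l) * jbr k powr s \<le> x l * y (dm k l) * (sqrt 10 * jbr (dm k l) powr s + C * jbr l powr s)"
        using PT[OF s0, of k l] x0 y0 unfolding C_def by (intro mult_left_mono) auto
      also have "\<dots> = sqrt 10 * (x l * Yt (dm k l)) + C * f l"
        unfolding Yt_def f_def Xt_def by (simp add: algebra_simps)
      finally show "x l * y (dm k l) * jbr k powr s \<le> sqrt 10 * (x l * Yt (dm k l)) + C * f l" .
    qed
    also have "\<dots> = (\<Sum>\<^sub>\<infinity>l. sqrt 10 * (x l * Yt (dm k l))) + (\<Sum>\<^sub>\<infinity>l. C * f l)"
      by (rule infsum_add[OF s2 s3])
    also have "\<dots> = sqrt 10 * u k + C * v k"
      unfolding u_def fv[symmetric] by (simp add: infsum_cmult_right')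
    finally show ?thesis .
  qed
  have pw2: "(z k)\<^sup>2 * jbr k powr (2 * s) \<le> 20 * (u k)\<^sup>2 + 2 * C\<^sup>2 * (v k)\<^sup>2" for k
  proof -
    have "(z k)\<^sup>2 * jbr k powr (2 * s) = (z k * jbr k powr s)\<^sup>2"
      by (simp add: power_mult_distrib sq_powr[OF jbr_pos])
    also have "\<dots> \<le> (sqrt 10 * u k + C * v k)\<^sup>2"
      using pw[of k] z0[of k] by (intro power_mono) auto
    also have "\<dots> \<le> 2 * (sqrt 10 * u k)\<^sup>2 + 2 * (C * v k)\<^sup>2"
      using sum_squares_bound[of "sqrt 10 * u k" "C * v k"]
      by (simp add: power2_eq_square algebra_simps)
    also have "\<dots> = 20 * (u k)\<^sup>2 + 2 * C\<^sup>2 * (v k)\<^sup>2"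
      by (simp add: power_mult_distrib)
    finally show ?thesis .
  qed
  have us: "(\<lambda>k. (u k)\<^sup>2) summable_on UNIV" unfolding u_def by (rule U(2))
  have vs: "(\<lambda>k. (v k)\<^sup>2) summable_on UNIV" unfolding v_def by (rule V(2))
  have rs: "(\<lambda>k. 20 * (u k)\<^sup>2 + 2 * C\<^sup>2 * (v k)\<^sup>2) summable_on UNIV"
    by (intro summable_on_add summable_on_cmult_right us vs)
  have Ps: "(\<lambda>k. (z k)\<^sup>2 * jbr k powr (2 * s)) summable_on UNIV"
    by (rule summable_on_comparison_test[OF rs]) (use pw2 in auto)
  then show "(\<lambda>k. (\<Sum>\<^sub>\<infinity>l. x l * y (dm k l))\<^sup>2 * jbr k powr (2 * s)) summable_on UNIV"
    unfolding z_def .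
  have usum: "(\<Sum>\<^sub>\<infinity>k. (u k)\<^sup>2) \<le> S * XA * YS"
  proof -
    have "(\<Sum>\<^sub>\<infinity>k. (u k)\<^sup>2) \<le> (\<Sum>\<^sub>\<infinity>l. x l)\<^sup>2 * YS" unfolding u_def Yt2v[symmetric] by (rule U(3))
    also have "\<dots> \<le> (S * XA) * YS" using lx(2) YS0 unfolding S_def XA_def by (intro mult_right_mono) auto
    finally show ?thesis by simp
  qed
  have vsum: "(\<Sum>\<^sub>\<infinity>k. (v k)\<^sup>2) \<le> S * YA * XS"
  proof -
    have "(\<Sum>\<^sub>\<infinity>k. (v k)\<^sup>2) \<le> (\<Sum>\<^sub>\<infinity>l. y l)\<^sup>2 * XS" unfolding v_def Xt2v[symmetric] by (rule V(3))
    also have "\<dots> \<le> (S * YA) * XS" using ly(2) XS0 unfolding S_def YA_def by (intro mult_right_mono) auto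
    finally show ?thesis by simp
  qed
  have tot: "(\<Sum>\<^sub>\<infinity>k. (z k)\<^sup>2 * jbr k powr (2 * s)) \<le> 20 * (S * XA * YS) + 2 * C\<^sup>2 * (S * YA * XS)"
  proof -
    have "(\<Sum>\<^sub>\<infinity>k. (z k)\<^sup>2 * jbr k powr (2 * s)) \<le> (\<Sum>\<^sub>\<infinity>k. 20 * (u k)\<^sup>2 + 2 * C\<^sup>2 * (v k)\<^sup>2)"
      by (rule infsum_mono[OF Ps rs pw2])
    also have "\<dots> = 20 * (\<Sum>\<^sub>\<infinity>k. (u k)\<^sup>2) + 2 * C\<^sup>2 * (\<Sum>\<^sub>\<infinity>k. (v k)\<^sup>2)"
      using us vs by (simp add: infsum_add summable_on_cmult_right infsum_cmult_right')
    also have "\<dots> \<le> 20 * (S * XA * YS) + 2 * C\<^sup>2 * (S * YA * XS)"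
      using usum vsum by (intro add_mono mult_left_mono) auto
    finally show ?thesis .
  qed
  define P where "P = sqrt (20 * S) * sqrt XA * sqrt YS"
  define Q where "Q = C * sqrt (2 * S) * sqrt XS * sqrt YA"
  have P0: "P \<ge> 0" unfolding P_def using S0 XA0 YS0 by simp
  have Q0: "Q \<ge> 0" unfolding Q_def using C0 S0 YA0 XS0 by simp
  have P2: "P\<^sup>2 = 20 * (S * XA * YS)" unfolding P_def using S0 XA0 YS0
    by (simp add: power_mult_distrib)
  have Q2: "Q\<^sup>2 = 2 * C\<^sup>2 * (S * YA * XS)" unfolding Q_def using S0 YA0 XS0
    by (simp add: power_mult_distrib)
  have "sqrt (\<Sum>\<^sub>\<infinity>k. (z k)\<^sup>2 * jbr k powr (2 * s)) \<le> sqrt (P\<^sup>2 + Q\<^sup>2)"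
    using tot unfolding P2 Q2 by simp
  also have "\<dots> \<le> sqrt ((P + Q)\<^sup>2)"
    using P0 Q0 by (intro real_sqrt_le_mono) (simp add: power2_eq_square algebra_simps)
  also have "\<dots> = P + Q" using P0 Q0 by simp
  finally show "sqrt (\<Sum>\<^sub>\<infinity>k. (\<Sum>\<^sub>\<infinity>l. x l * y (dm k l))\<^sup>2 * jbr k powr (2 * s)) \<le>
      sqrt (20 * (\<Sum>\<^sub>\<infinity>k::'d\<Rightarrow>int. jbr k powr (-2 * \<alpha>0)))
        * sqrt (\<Sum>\<^sub>\<infinity>l. (x l)\<^sup>2 * jbr l powr (2 * \<alpha>0)) * sqrt (\<Sum>\<^sub>\<infinity>l. (y l)\<^sup>2 * jbr l powr (2 * s))
    + (1 - 10 powr (-1 / (2 * s))) powr (-s) * sqrt (2 * (\<Sum>\<^sub>\<infinity>k::'d\<Rightarrow>int. jbr k powr (-2 * \<alpha>0)))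
        * sqrt (\<Sum>\<^sub>\<infinity>l. (x l)\<^sup>2 * jbr l powr (2 * s)) * sqrt (\<Sum>\<^sub>\<infinity>l. (y l)\<^sup>2 * jbr l powr (2 * \<alpha>0))"
    unfolding z_def P_def Q_def S_def C_def XA_def YA_def XS_def YS_def .
qed



theorem lemma3p1:
  fixes B :: "('d::finite) seq set" and N :: "'d seq \<Rightarrow> real"
    and \<alpha>0 s :: real and X Y :: "'d mat"
  assumes "seq_banach_algebra B N"
    and "\<alpha>0 > real CARD('d) / 2"
    and "s \<ge> \<alpha>0"
    and "in_Ms B N s X" and "in_Ms B N s Y"
  shows "in_Ms B N s (mprod X Y) \<and>
    msnorm N s (mprod X Y) \<le>
      sqrt (20 * (\<Sum>\<^sub>\<infinity>k::'d\<Rightarrow>int. jbr k powr (-2 * \<alpha>0))) * msnorm N \<alpha>0 X * msnorm N s Y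
    + (1 - 10 powr (-1 / (2 * s))) powr (-s) * sqrt (2 * (\<Sum>\<^sub>\<infinity>k::'d\<Rightarrow>int. jbr k powr (-2 * \<alpha>0)))
        * msnorm N s X * msnorm N \<alpha>0 Y"
proof -
  interpret sba B N by (rule sba.intro) (rule assms(1))
  have a0: "\<alpha>0 > 0" using assms(2) by (smt (verit) divide_nonneg_nonneg of_nat_0_le_iff)
  have s0: "s > 0" using a0 assms(3) by simp
  define x where "x l = N (diag X l)" for l
  define y where "y l = N (diag Y l)" for l
  have XB: "diag X l \<in> B" for l using assms(4) unfolding in_Ms_def in_M_def by blast
  have YB: "diag Y l \<in> B" for l using assms(5) unfolding in_Ms_def in_M_def by blast
  have x0: "x l \<ge> 0" for l unfolding x_def using N_nonneg[OF XB] .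
  have y0: "y l \<ge> 0" for l unfolding y_def using N_nonneg[OF YB] .
  have xs: "(\<lambda>l. (x l)\<^sup>2 * jbr l powr (2 * s)) summable_on UNIV"
    using assms(4) unfolding in_Ms_def x_def by blast
  have ys: "(\<lambda>l. (y l)\<^sup>2 * jbr l powr (2 * s)) summable_on UNIV"
    using assms(5) unfolding in_Ms_def y_def by blast
  note Ss = S_summable[OF assms(2)]
  note R = main_real[OF x0 y0 s0 assms(3) Ss xs ys]
  define z where "z k = (\<Sum>\<^sub>\<infinity>l. x l * y (dm k l))" for k
  have dd: "diag (mprod X Y) k \<in> B \<and> N (diag (mprod X Y) k) \<le> z k" for k
  proof -
    define f where "f l = (\<lambda>i. diag X l i * shift l (diag Y (dm k l)) i)" for l
    have fB: "f l \<in> B" for l unfolding f_def by (intro mult_B XB shift_B YB)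
    have Nf: "N (f l) \<le> x l * y (dm k l)" for l
      unfolding f_def x_def y_def using N_mult[OF XB shift_B[OF YB]] N_shift[OF YB] by simp
    have Nfs: "(\<lambda>l. N (f l)) summable_on UNIV"
      by (rule summable_on_comparison_test[OF R(1)[of k]]) (use Nf N_nonneg[OF fB] in auto)
    note SB = series_B[OF fB Nfs]
    have eq: "diag (mprod X Y) k = (\<lambda>i. \<Sum>\<^sub>\<infinity>l. f l i)"
    proof
      fix i
      have "diag (mprod X Y) k i = (\<Sum>\<^sub>\<infinity>m. X i m * Y m (\<lambda>v. i v - k v))"
        unfolding diag_def mprod_def by simp
      also have "\<dots> = (\<Sum>\<^sub>\<infinity>l. X i (dm i l) * Y (dm i l) (\<lambda>v. i v - k v))"
        using infsum_reindex_bij_betw[OF bij_dm1[of i], of "\<lambda>m. X i m * Y m (\<lambda>v. i v - k v)"] by simp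
      also have "\<dots> = (\<Sum>\<^sub>\<infinity>l. f l i)"
        unfolding f_def diag_def shift_def dm_def by simp
      finally show "diag (mprod X Y) k i = (\<Sum>\<^sub>\<infinity>l. f l i)" .
    qed
    have "N (diag (mprod X Y) k) \<le> (\<Sum>\<^sub>\<infinity>l. N (f l))" unfolding eq using SB(2) by blast
    also have "\<dots> \<le> z k" unfolding z_def by (rule infsum_mono[OF Nfs R(1) Nf])
    finally show ?thesis unfolding eq using SB(2) by blast
  qed
  define \<Phi> where "\<Phi> k = (N (diag (mprod X Y) k))\<^sup>2 * jbr k powr (2 * s)" for k
  have \<Phi>le: "\<Phi> k \<le> (z k)\<^sup>2 * jbr k powr (2 * s)" for k
  proof -
    have "N (diag (mprod X Y) k) \<ge> 0" using N_nonneg dd by blast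
    then have "(N (diag (mprod X Y) k))\<^sup>2 \<le> (z k)\<^sup>2" using dd[of k] by (intro power_mono) auto
    then show ?thesis unfolding \<Phi>_def by (intro mult_right_mono) auto
  qed
  have \<Phi>0: "\<Phi> k \<ge> 0" for k unfolding \<Phi>_def by simp
  have zs: "(\<lambda>k. (z k)\<^sup>2 * jbr k powr (2 * s)) summable_on UNIV" unfolding z_def by (rule R(2))
  have \<Phi>s: "\<Phi> summable_on UNIV"
    by (rule summable_on_comparison_test[OF zs]) (use \<Phi>le \<Phi>0 in auto)
  have inMs: "in_Ms B N s (mprod X Y)"
    unfolding in_Ms_def in_M_def using dd \<Phi>s unfolding \<Phi>_def by blast
  have "msnorm N s (mprod X Y) = sqrt (\<Sum>\<^sub>\<infinity>k. \<Phi> k)" unfolding msnorm_def \<Phi>_def ..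
  also have "\<dots> \<le> sqrt (\<Sum>\<^sub>\<infinity>k. (z k)\<^sup>2 * jbr k powr (2 * s))"
    by (intro real_sqrt_le_mono infsum_mono[OF \<Phi>s zs \<Phi>le])
  also have "\<dots> \<le> sqrt (20 * (\<Sum>\<^sub>\<infinity>k::'d\<Rightarrow>int. jbr k powr (-2 * \<alpha>0))) * msnorm N \<alpha>0 X * msnorm N s Y
    + (1 - 10 powr (-1 / (2 * s))) powr (-s) * sqrt (2 * (\<Sum>\<^sub>\<infinity>k::'d\<Rightarrow>int. jbr k powr (-2 * \<alpha>0)))
        * msnorm N s X * msnorm N \<alpha>0 Y"
    using R(3) unfolding z_def msnorm_def x_def y_def .
  finally show ?thesis using inMs by blast
qed


end
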